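(* Consider the Markov process described in the context with $K=1$, satisfying Assumption (A) and the ergodicity condition (E). For each $x\in\{-1,1\}^c$ let $\beta_{0,x}\in(0,1)$ be a root of $(\mathrm E_x)$, and for $i=1,\dots,c$ let \[\beta_{i,x}=\frac{F_i(\beta_{0,x})+x_iR_i(\beta_{0,x})}{2D_i(\beta_{0,x})}.\] Then the $2^c$ functions $W\ni\mathbf n\mapsto \beta_{0,x}^{n_0}\beta_{1,x}^{n_1}\cdots\beta_{c,x}^{n_c}$, $x\in\{-1,1\}^c$, are linearly independent on $W$.
   Context: Fix integers $c\ge 1$ and $K\ge1$ (in the claim $K=1$). Consider an irreducible continuous-time Markov process on $V\cup W$, where $V$ is finite and $W=\{\mathbf n=(n_0,\dots,n_c): n_0\in\{0,1,\dots\},\ n_i\in\{0,1\}\}$. For each $i\in\{1,\dots,c\}$ and integer $k\le K$ there are nonnegative rates $a_{k,i},b_{k,i},c_{k,i},d_{k,i}$. From $\mathbf n\in W$, for each $i$ and $k\in\{-n_0,\dots,K\}$, the process jumps (changing only coordinates $0$ and $i$) from $(n_0,n_i)=(n_0,0)$ to $(n_0+k,1)$ at rate $a_{k,i}$ and to $(n_0+k,0)$ at rate $b_{k,i}$, and from $(n_0,1)$ to $(n_0+k,1)$ at rate $c_{k,i}$ and to $(n_0+k,0)$ at rate $d_{k,i}$; from $\mathbf n$ it jumps into $V$ with total rate $\sum_i\sum_{k\le -n_0-1}((1-n_i)(a_{k,i}+b_{k,i})+n_i(c_{k,i}+d_{k,i}))$; no other transitions leave $W$, and from $V$ no transitions go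 to states with $n_0\ge K$. Let $A_i(z)=\sum_{k=-\infty}^K a_{k,i}z^{K-k}$ and similarly $B_i,C_i,D_i$ with $b,c,d$. Assumption (A): for each $i$: (i) $A_i(1),B_i(1),C_i(1),D_i(1)<\infty$; (ii) $A_i(1),D_i(1)>0$; (iii) $A_i'(1),B_i'(1),C_i'(1),D_i'(1)<\infty$; (iv) $a_{K,i}=0$ or $d_{K,i}=0$; (v) $b_{K,i}=c_{K,i}\ne0$. Ergodicity condition (E): $0<\sum_{i=1}^c\frac{1}{A_i(1)+D_i(1)}\bigl(D_i(1)(A_i'(1)-KA_i(1)+B_i'(1)-KB_i(1))+A_i(1)(C_i'(1)-KC_i(1)+D_i'(1)-KD_i(1))\bigr)$. Let $F_i(z)=z^K(A_i(1)+B_i(1)-C_i(1)-D_i(1))-B_i(z)+C_i(z)$. For real $\beta_0\in[0,1]$ let $R_i(\beta_0)=\sqrt{F_i(\beta_0)^2+4A_i(\beta_0)D_i(\beta_0)}$ (nonnegative square root). For $x\in\{-1,1\}^c$, equation $(\mathrm E_x)$ in the unknown $\beta_0$ is \[0=\sum_{i=1}^c\Bigl(x_iR_i(\beta_0)+B_i(\beta_0)+C_i(\beta_0)-\beta_0^K\bigl(A_i(1)+B_i(1)+C_i(1)+D_i(1)\bigr)\Bigr).\] *)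

theory Defs
  imports Complex_Main
begin

text \<open>A rate a_{k,i} with integer k \<le> 1 is stored as
  ra i m = a_{1-m,i}, m :: nat, so that A_i(z) = sum_m ra i m z^m.
  States of W are functions n :: nat \<Rightarrow> nat with n 0 = n_0,
  n i \<in> {0,1} for 1 \<le> i \<le> c and n i = 0 for i > c.\<close>

definition gf :: "(nat \<Rightarrow> real) \<Rightarrow> real \<Rightarrow> real" where
  "gf p z = (\<Sum>m. p m * z ^ m)"

definition gf' :: "(nat \<Rightarrow> real) \<Rightarrow> real" where
  "gf' p = (\<Sum>m. real m * p m)"

definition Wset :: "nat \<Rightarrow> (nat \<Rightarrow> nat) set" where
  "Wset c = {n. (\<forall>i. 1 \<le> i \<and> i \<le> c \<longrightarrow> n i \<le> 1) \<and> (\<forall>i. c < i \<longrightarrow> n i = 0)}"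

text \<open>positive-rate transitions inside W (k = 1 - m ranges over {-n_0,..,1})\<close>
definition wedge :: "nat \<Rightarrow> (nat \<Rightarrow> nat \<Rightarrow> real) \<Rightarrow> (nat \<Rightarrow> nat \<Rightarrow> real) \<Rightarrow>
    (nat \<Rightarrow> nat \<Rightarrow> real) \<Rightarrow> (nat \<Rightarrow> nat \<Rightarrow> real) \<Rightarrow> (nat \<Rightarrow> nat) \<Rightarrow> (nat \<Rightarrow> nat) \<Rightarrow> bool" where
  "wedge c ra rb rc rd n n' \<longleftrightarrow>
     (\<exists>i\<in>{1..c}. \<exists>m \<le> n 0 + 1.
        (n i = 0 \<and> ((ra i m > 0 \<and> n' = n(0 := n 0 + 1 - m, i := 1))
                   \<or> (rb i m > 0 \<and> n' = n(0 := n 0 + 1 - m, i := 0)))) \<or>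
        (n i = 1 \<and> ((rc i m > 0 \<and> n' = n(0 := n 0 + 1 - m, i := 1))
                   \<or> (rd i m > 0 \<and> n' = n(0 := n 0 + 1 - m, i := 0)))))"

text \<open>total rate from n into V (k \<le> -n_0-1, i.e. m \<ge> n_0+2)\<close>
definition exitrate :: "nat \<Rightarrow> (nat \<Rightarrow> nat \<Rightarrow> real) \<Rightarrow> (nat \<Rightarrow> nat \<Rightarrow> real) \<Rightarrow>
    (nat \<Rightarrow> nat \<Rightarrow> real) \<Rightarrow> (nat \<Rightarrow> nat \<Rightarrow> real) \<Rightarrow> (nat \<Rightarrow> nat) \<Rightarrow> real" where
  "exitrate c ra rb rc rd n =
     (\<Sum>i=1..c. if n i = 0 then (\<Sum>j. ra i (j + n 0 + 2) + rb i (j + n 0 + 2))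
                else (\<Sum>j. rc i (j + n 0 + 2) + rd i (j + n 0 + 2)))"

text \<open>There is an irreducible continuous-time Markov process on V \<union> W (V finite)
  whose W-part has the prescribed rates; irreducibility = every state reaches
  every other state along positive-rate transitions.\<close>
definition irreducible_model :: "nat \<Rightarrow> (nat \<Rightarrow> nat \<Rightarrow> real) \<Rightarrow> (nat \<Rightarrow> nat \<Rightarrow> real) \<Rightarrow>
    (nat \<Rightarrow> nat \<Rightarrow> real) \<Rightarrow> (nat \<Rightarrow> nat \<Rightarrow> real) \<Rightarrow> bool" where
  "irreducible_model c ra rb rc rd \<longleftrightarrow>
    (\<exists>(V :: nat set) (qVV :: nat \<Rightarrow> nat \<Rightarrow> real) (qVW :: nat \<Rightarrow> (nat \<Rightarrow> nat) \<Rightarrow> real)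
       (qWV :: (nat \<Rightarrow> nat) \<Rightarrow> nat \<Rightarrow> real).
       finite V \<and>
       (\<forall>v w. 0 \<le> qVV v w) \<and> (\<forall>v n. 0 \<le> qVW v n) \<and> (\<forall>n v. 0 \<le> qWV n v) \<and>
       (\<forall>v n. 1 \<le> n 0 \<longrightarrow> qVW v n = 0) \<and>
       (\<forall>n\<in>Wset c. (\<Sum>v\<in>V. qWV n v) = exitrate c ra rb rc rd n) \<and>
       (let S = Inl ` V \<union> Inr ` Wset c;
            E = {(Inl v, Inl w) | v w. v \<in> V \<and> w \<in> V \<and> 0 < qVV v w}
              \<union> {(Inl v, Inr n) | v n. v \<in> V \<and> n \<in> Wset c \<and> 0 < qVW v n}
              \<union> {(Inr n, Inl v) | n v. n \<in> Wset c \<and> v \<in> V \<and> 0 < qWV n v}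
              \<union> {(Inr n, Inr n') | n n'. n \<in> Wset c \<and> wedge c ra rb rc rd n n'}
        in \<forall>s\<in>S. \<forall>t\<in>S. (s, t) \<in> E\<^sup>*))"

definition assumption_A :: "nat \<Rightarrow> (nat \<Rightarrow> nat \<Rightarrow> real) \<Rightarrow> (nat \<Rightarrow> nat \<Rightarrow> real) \<Rightarrow>
    (nat \<Rightarrow> nat \<Rightarrow> real) \<Rightarrow> (nat \<Rightarrow> nat \<Rightarrow> real) \<Rightarrow> bool" where
  "assumption_A c ra rb rc rd \<longleftrightarrow>
    (\<forall>i\<in>{1..c}.
       (\<forall>m. 0 \<le> ra i m \<and> 0 \<le> rb i m \<and> 0 \<le> rc i m \<and> 0 \<le> rd i m) \<and>
       summable (ra i) \<and> summable (rb i) \<and> summable (rc i) \<and> summable (rd i) \<and>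
       gf (ra i) 1 > 0 \<and> gf (rd i) 1 > 0 \<and>
       summable (\<lambda>m. real m * ra i m) \<and> summable (\<lambda>m. real m * rb i m) \<and>
       summable (\<lambda>m. real m * rc i m) \<and> summable (\<lambda>m. real m * rd i m) \<and>
       (ra i 0 = 0 \<or> rd i 0 = 0) \<and>
       rb i 0 = rc i 0 \<and> rb i 0 \<noteq> 0)"

definition ergodic_E :: "nat \<Rightarrow> (nat \<Rightarrow> nat \<Rightarrow> real) \<Rightarrow> (nat \<Rightarrow> nat \<Rightarrow> real) \<Rightarrow>
    (nat \<Rightarrow> nat \<Rightarrow> real) \<Rightarrow> (nat \<Rightarrow> nat \<Rightarrow> real) \<Rightarrow> bool" where
  "ergodic_E c ra rb rc rd \<longleftrightarrow>
    0 < (\<Sum>i=1..c. 1 / (gf (ra i) 1 + gf (rd i) 1) *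
          (gf (rd i) 1 * (gf' (ra i) - gf (ra i) 1 + gf' (rb i) - gf (rb i) 1)
           + gf (ra i) 1 * (gf' (rc i) - gf (rc i) 1 + gf' (rd i) - gf (rd i) 1)))"

definition Ffun :: "(nat \<Rightarrow> real) \<Rightarrow> (nat \<Rightarrow> real) \<Rightarrow> (nat \<Rightarrow> real) \<Rightarrow> (nat \<Rightarrow> real) \<Rightarrow> real \<Rightarrow> real" where
  "Ffun a b cc d z = z * (gf a 1 + gf b 1 - gf cc 1 - gf d 1) - gf b z + gf cc z"

definition Rfun :: "(nat \<Rightarrow> real) \<Rightarrow> (nat \<Rightarrow> real) \<Rightarrow> (nat \<Rightarrow> real) \<Rightarrow> (nat \<Rightarrow> real) \<Rightarrow> real \<Rightarrow> real" where
  "Rfun a b cc d z = sqrt ((Ffun a b cc d z)\<^sup>2 + 4 * gf a z * gf d z)"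

definition signs :: "nat \<Rightarrow> (nat \<Rightarrow> real) set" where
  "signs c = {x. (\<forall>i\<in>{1..c}. x i = 1 \<or> x i = -1) \<and> (\<forall>i. i \<notin> {1..c} \<longrightarrow> x i = 0)}"

definition eq_Ex :: "nat \<Rightarrow> (nat \<Rightarrow> nat \<Rightarrow> real) \<Rightarrow> (nat \<Rightarrow> nat \<Rightarrow> real) \<Rightarrow>
    (nat \<Rightarrow> nat \<Rightarrow> real) \<Rightarrow> (nat \<Rightarrow> nat \<Rightarrow> real) \<Rightarrow> (nat \<Rightarrow> real) \<Rightarrow> real \<Rightarrow> bool" where
  "eq_Ex c ra rb rc rd x z \<longleftrightarrow>
    0 = (\<Sum>i=1..c. x i * Rfun (ra i) (rb i) (rc i) (rd i) z + gf (rb i) z + gf (rc i) z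
          - z * (gf (ra i) 1 + gf (rb i) 1 + gf (rc i) 1 + gf (rd i) 1))"

definition beta_i :: "(nat \<Rightarrow> real) \<Rightarrow> (nat \<Rightarrow> real) \<Rightarrow> (nat \<Rightarrow> real) \<Rightarrow> (nat \<Rightarrow> real) \<Rightarrow> real \<Rightarrow> real \<Rightarrow> real" where
  "beta_i a b cc d s z = (Ffun a b cc d z + s * Rfun a b cc d z) / (2 * gf d z)"

end

theory Submission imports Defs "HOL-Library.FuncSet" begin

lemma gf_pos:
  assumes "\<forall>m. 0 \<le> p m" "summable p" "gf p 1 > 0" "0 < z" "z < 1"
  shows "gf p z > 0"
proof -
  have "suminf p > 0" using assms(3) by (simp add: gf_def)
  then obtain m where m: "p m > 0"
    using assms(1) by (metis less_eq_real_def suminf_zero ext)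
  have sm: "summable (\<lambda>m. p m * z ^ m)"
    by (rule summable_comparison_test[OF _ assms(2)])
       (use assms in \<open>auto intro!: exI[of _ 0] simp: abs_mult mult_left_le power_le_one\<close>)
  have "0 < (\<Sum>m. p m * z ^ m)"
    by (rule suminf_pos2[OF sm, of m]) (use assms m in auto)
  thus ?thesis by (simp add: gf_def)
qed

lemma exp_indep:
  fixes S :: "'a set" and g b :: "'a \<Rightarrow> real"
  assumes "finite S" "\<forall>x\<in>S. b x > 0" "\<forall>k::nat. (\<Sum>x\<in>S. g x * b x ^ k) = 0"
  shows "(\<Sum>x\<in>S. if b x = v then g x else 0) = 0"
  using assms
proof (induction "card (b ` S)" arbitrary: S rule: less_induct)
  case less
  show ?case
  proof (cases "S = {}")
    case True then show ?thesis by simp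
  next
    case False
    define M where "M = Max (b ` S)"
    have Mmem: "M \<in> b ` S" unfolding M_def using False less.prems by auto
    have Mge: "\<forall>x\<in>S. b x \<le> M" unfolding M_def using less.prems by auto
    have Mpos: "M > 0" using Mmem less.prems by auto
    define S1 where "S1 = {x\<in>S. b x = M}"
    define S2 where "S2 = S - S1"
    have fin1: "finite S1" "finite S2" using less.prems by (auto simp: S1_def S2_def)
    have S12: "S = S1 \<union> S2" "S1 \<inter> S2 = {}" by (auto simp: S1_def S2_def)
    have lt: "\<forall>x\<in>S2. b x < M" using Mge by (auto simp: S1_def S2_def less_le)
    have split: "\<And>h. (\<Sum>x\<in>S. h x) = (\<Sum>x\<in>S1. h x) + (\<Sum>x\<in>S2. h x)"
      using S12 fin1 by (metis sum.union_disjoint)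
    have h0: "(\<Sum>x\<in>S1. g x) + (\<Sum>x\<in>S2. g x * (b x / M) ^ k) = 0" for k :: nat
    proof -
      have "(\<Sum>x\<in>S. g x * (b x / M) ^ k) = (\<Sum>x\<in>S. g x * b x ^ k) / M ^ k"
        by (simp add: power_divide sum_divide_distrib)
      also have "\<dots> = 0" using less.prems by simp
      finally have "(\<Sum>x\<in>S. g x * (b x / M) ^ k) = 0" .
      moreover have "(\<Sum>x\<in>S1. g x * (b x / M) ^ k) = (\<Sum>x\<in>S1. g x)"
        using Mpos by (simp add: S1_def)
      ultimately show ?thesis using split[of "\<lambda>x. g x * (b x / M) ^ k"] by simp
    qed
    have "(\<lambda>k. (\<Sum>x\<in>S1. g x) + (\<Sum>x\<in>S2. g x * (b x / M) ^ k)) \<longlonglongrightarrow> (\<Sum>x\<in>S1. g x) + (\<Sum>x\<in>S2. g x * 0)"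
    proof (intro tendsto_add tendsto_const tendsto_sum tendsto_mult LIMSEQ_power_zero)
      fix x assume "x \<in> S2"
      then have "0 < b x" "b x < M" using lt less.prems by (auto simp: S2_def)
      then show "norm (b x / M) < 1" using Mpos by simp
    qed
    then have "(\<lambda>k::nat. 0::real) \<longlonglongrightarrow> (\<Sum>x\<in>S1. g x)" using h0 by simp
    then have s1: "(\<Sum>x\<in>S1. g x) = 0" using LIMSEQ_unique tendsto_const by blast
    have s2: "\<forall>k::nat. (\<Sum>x\<in>S2. g x * b x ^ k) = 0"
    proof
      fix k :: nat
      have "(\<Sum>x\<in>S1. g x * b x ^ k) = (\<Sum>x\<in>S1. g x) * M ^ k"
        by (simp add: S1_def sum_distrib_right)
      then show "(\<Sum>x\<in>S2. g x * b x ^ k) = 0"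
        using split[of "\<lambda>x. g x * b x ^ k"] less.prems s1 by simp
    qed
    have card: "card (b ` S2) < card (b ` S)"
    proof (rule psubset_card_mono)
      show "finite (b ` S)" using less.prems by simp
      have "M \<notin> b ` S2" using lt by auto
      moreover have "b ` S2 \<subseteq> b ` S" by (auto simp: S2_def)
      ultimately show "b ` S2 \<subset> b ` S" using Mmem by blast
    qed
    have IH: "(\<Sum>x\<in>S2. if b x = v then g x else 0) = 0"
      using less.hyps[OF card fin1(2)] less.prems s2 by (auto simp: S2_def)
    show ?thesis
    proof (cases "v = M")
      case True
      have "(\<Sum>x\<in>S. if b x = v then g x else 0) = (\<Sum>x\<in>S1. g x)"
        using less.prems True by (simp add: S1_def sum.inter_filter[symmetric])
      then show ?thesis using s1 by simp
    next
      case False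
      have "(\<Sum>x\<in>S1. if b x = v then g x else 0) = 0" using False by (simp add: S1_def)
      then show ?thesis using split[of "\<lambda>x. if b x = v then g x else 0"] IH by simp
    qed
  qed
qed

lemma finite_signs: "finite (signs c)"
proof -
  have "signs c \<subseteq> (\<lambda>f i. if i \<in> {1..c} then f i else 0) ` PiE {1..c} (\<lambda>_. {1, -1::real})"
  proof
    fix x assume x: "x \<in> signs c"
    show "x \<in> (\<lambda>f i. if i \<in> {1..c} then f i else 0) ` PiE {1..c} (\<lambda>_. {1, -1::real})"
    proof (rule image_eqI[of _ _ "(\<lambda>i. if i \<in> {1..c} then x i else undefined)"])
      show "x = (\<lambda>i. if i \<in> {1..c} then (\<lambda>i. if i \<in> {1..c} then x i else undefined) i else 0)"
        using x by (auto simp: signs_def fun_eq_iff)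
      show "(\<lambda>i. if i \<in> {1..c} then x i else undefined) \<in> PiE {1..c} (\<lambda>_. {1, -1})"
        using x unfolding signs_def by (intro PiE_I) auto
    qed
  qed
  moreover have "finite (PiE {1..c} (\<lambda>_. {1, -1::real}))" by (intro finite_PiE) auto
  ultimately show ?thesis by (meson finite_imageI finite_subset)
qed

lemma prod_pow_if:
  assumes "finite I" "E \<subseteq> I"
  shows "(\<Prod>i\<in>I. q i ^ (if i \<in> E then 1 else 0)) = (\<Prod>i\<in>E. (q i :: real))"
proof -
  have "(\<Prod>i\<in>I. q i ^ (if i \<in> E then 1 else 0)) = (\<Prod>i\<in>I. if i \<in> E then q i else 1)"
    by (rule prod.cong) auto
  also have "\<dots> = (\<Prod>i\<in>{i\<in>I. i \<in> E}. q i)" using assms by (simp add: prod.inter_filter)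
  also have "{i\<in>I. i \<in> E} = E" using assms by auto
  finally show ?thesis .
qed


theorem lemma4:
  fixes c :: nat
    and ra rb rc rd :: "nat \<Rightarrow> nat \<Rightarrow> real"
    and beta0 :: "(nat \<Rightarrow> real) \<Rightarrow> real"
  assumes "1 \<le> c"
    and "irreducible_model c ra rb rc rd"
    and "assumption_A c ra rb rc rd"
    and "ergodic_E c ra rb rc rd"
    and "\<forall>x\<in>signs c. 0 < beta0 x \<and> beta0 x < 1 \<and> eq_Ex c ra rb rc rd x (beta0 x)"
  shows "\<forall>\<gamma> :: (nat \<Rightarrow> real) \<Rightarrow> real.
           (\<forall>n\<in>Wset c. (\<Sum>x\<in>signs c. \<gamma> x * (beta0 x ^ n 0 *
               (\<Prod>i=1..c. beta_i (ra i) (rb i) (rc i) (rd i) (x i) (beta0 x) ^ n i))) = 0)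
           \<longrightarrow> (\<forall>x\<in>signs c. \<gamma> x = 0)"
proof (intro allI impI ballI)
  fix \<gamma> :: "(nat \<Rightarrow> real) \<Rightarrow> real" and x0
  assume H: "\<forall>n\<in>Wset c. (\<Sum>x\<in>signs c. \<gamma> x * (beta0 x ^ n 0 *
               (\<Prod>i=1..c. beta_i (ra i) (rb i) (rc i) (rd i) (x i) (beta0 x) ^ n i))) = 0"
    and x0: "x0 \<in> signs c"
  define S where "S = signs c"
  define I where "I = {1..c}"
  have finS: "finite S" by (simp add: S_def finite_signs)
  have finI: "finite I" by (simp add: I_def)
  define v where "v = beta0 x0"
  have v01: "0 < v" "v < 1" using assms(5) x0 by (auto simp: v_def)
  define p where "p i s = beta_i (ra i) (rb i) (rc i) (rd i) s v" for i s
  have pne: "p i 1 \<noteq> p i (-1)" if i: "i \<in> I" for i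
  proof -
    have A: "\<forall>m. 0 \<le> ra i m \<and> 0 \<le> rb i m \<and> 0 \<le> rc i m \<and> 0 \<le> rd i m"
      "summable (ra i)" "summable (rd i)" "gf (ra i) 1 > 0" "gf (rd i) 1 > 0"
      using assms(3) i by (auto simp: assumption_A_def I_def)
    have Ap: "gf (ra i) v > 0" by (rule gf_pos) (use A v01 in auto)
    have Dp: "gf (rd i) v > 0" by (rule gf_pos) (use A v01 in auto)
    have Rp: "Rfun (ra i) (rb i) (rc i) (rd i) v > 0"
      unfolding Rfun_def using Ap Dp
      by (intro real_sqrt_gt_zero) (simp add: add_nonneg_pos)
    show ?thesis
    proof
      assume "p i 1 = p i (-1)"
      then have "(Ffun (ra i) (rb i) (rc i) (rd i) v + Rfun (ra i) (rb i) (rc i) (rd i) v) =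
                 (Ffun (ra i) (rb i) (rc i) (rd i) v - Rfun (ra i) (rb i) (rc i) (rd i) v)"
        using Dp by (simp add: p_def beta_i_def divide_simps)
      then show False using Rp by simp
    qed
  qed
  define d where "d i = p i (x0 i) - p i (- x0 i)" for i
  have x0s: "x0 i = 1 \<or> x0 i = -1" if "i \<in> I" for i
    using x0 that by (auto simp: signs_def I_def)
  have dne: "d i \<noteq> 0" if "i \<in> I" for i
    using pne[OF that] x0s[OF that] by (auto simp: d_def)
  define G where "G x = (if beta0 x = v then \<gamma> x else 0)" for x
  define mono where "mono E x = (\<Prod>i\<in>I. p i (x i) ^ (if i \<in> E then 1 else 0))" for E x
  have Q: "(\<Sum>x\<in>S. G x * mono E x) = 0" if E: "E \<subseteq> I" for E
  proof -
    define e where "e j = (if j \<in> E then 1 else 0 :: nat)" for j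
    define g where "g x = \<gamma> x * (\<Prod>i\<in>I. beta_i (ra i) (rb i) (rc i) (rd i) (x i) (beta0 x) ^ e i)" for x
    have "\<forall>k::nat. (\<Sum>x\<in>S. g x * beta0 x ^ k) = 0"
    proof
      fix k :: nat
      define n where "n j = (if j = 0 then k else e j)" for j
      have "n \<in> Wset c" using E by (auto simp: Wset_def n_def e_def I_def)
      with H have "(\<Sum>x\<in>signs c. \<gamma> x * (beta0 x ^ n 0 *
               (\<Prod>i=1..c. beta_i (ra i) (rb i) (rc i) (rd i) (x i) (beta0 x) ^ n i))) = 0" by blast
      moreover have "\<gamma> x * (beta0 x ^ n 0 *
               (\<Prod>i=1..c. beta_i (ra i) (rb i) (rc i) (rd i) (x i) (beta0 x) ^ n i)) = g x * beta0 x ^ k" for x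
      proof -
        have "(\<Prod>i=1..c. beta_i (ra i) (rb i) (rc i) (rd i) (x i) (beta0 x) ^ n i)
            = (\<Prod>i\<in>I. beta_i (ra i) (rb i) (rc i) (rd i) (x i) (beta0 x) ^ e i)"
          unfolding I_def by (rule prod.cong) (auto simp: n_def)
        then show ?thesis by (simp add: g_def n_def)
      qed
      ultimately show "(\<Sum>x\<in>S. g x * beta0 x ^ k) = 0" by (simp add: S_def)
    qed
    moreover have "\<forall>x\<in>S. beta0 x > 0" using assms(5) by (auto simp: S_def)
    ultimately have "(\<Sum>x\<in>S. if beta0 x = v then g x else 0) = 0"
      using exp_indep[OF finS] by blast
    moreover have "(if beta0 x = v then g x else 0) = G x * mono E x" for x
      by (auto simp: G_def g_def mono_def p_def e_def)
    ultimately show ?thesis by simp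
  qed
  define delta where "delta x = (\<Prod>i\<in>I. (p i (x i) - p i (- x0 i)) / d i)" for x
  have delta1: "delta x = (if x = x0 then 1 else 0)" if x: "x \<in> S" for x
  proof (cases "x = x0")
    case True then show ?thesis using dne by (simp add: delta_def d_def)
  next
    case False
    then obtain i where ne: "x i \<noteq> x0 i" by auto
    have iI: "i \<in> I"
    proof (rule ccontr)
      assume "i \<notin> I"
      then have "x i = 0" "x0 i = 0" using x x0 by (auto simp: S_def signs_def I_def)
      then show False using ne by simp
    qed
    have "x i = - x0 i" using ne x x0s[OF iI] iI by (auto simp: S_def signs_def I_def)
    then have "(p i (x i) - p i (- x0 i)) / d i = 0" by simp
    then have "delta x = 0" unfolding delta_def using iI finI
      by (meson prod_zero)
    then show ?thesis using False by simp
  qed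
  define coef where "coef E = (\<Prod>i\<in>E. 1 / d i) * (\<Prod>i\<in>I - E. - p i (- x0 i) / d i)" for E
  have expand: "delta x = (\<Sum>E\<in>Pow I. coef E * mono E x)" for x
  proof -
    have "delta x = (\<Prod>i\<in>I. p i (x i) * (1 / d i) + (- p i (- x0 i) / d i))"
      unfolding delta_def by (rule prod.cong) (auto simp: diff_divide_distrib)
    also have "\<dots> = (\<Sum>E\<in>Pow I. (\<Prod>i\<in>E. p i (x i) * (1 / d i)) * (\<Prod>i\<in>I - E. - p i (- x0 i) / d i))"
      by (rule prod_add[OF finI])
    also have "\<dots> = (\<Sum>E\<in>Pow I. coef E * mono E x)"
    proof (rule sum.cong[OF refl])
      fix E assume "E \<in> Pow I"
      then have monoE: "mono E x = (\<Prod>i\<in>E. p i (x i))" unfolding mono_def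
        using prod_pow_if[OF finI] by auto
      then show "(\<Prod>i\<in>E. p i (x i) * (1 / d i)) * (\<Prod>i\<in>I - E. - p i (- x0 i) / d i) = coef E * mono E x"
      proof -
        have "(\<Prod>i\<in>E. p i (x i) * (1 / d i)) = (\<Prod>i\<in>E. 1 / d i) * (\<Prod>i\<in>E. p i (x i))"
          by (simp add: prod.distrib[symmetric] mult.commute)
        then show ?thesis using monoE by (simp add: coef_def mult_ac)
      qed
    qed
    finally show ?thesis .
  qed
  have "\<gamma> x0 = (\<Sum>x\<in>S. G x * delta x)"
  proof -
    have "(\<Sum>x\<in>S. G x * delta x) = (\<Sum>x\<in>S. if x = x0 then G x else 0)"
      by (rule sum.cong) (auto simp: delta1)
    also have "\<dots> = G x0" using x0 finS by (simp add: S_def)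
    finally show ?thesis by (simp add: G_def v_def)
  qed
  also have "\<dots> = (\<Sum>x\<in>S. \<Sum>E\<in>Pow I. coef E * (G x * mono E x))"
    by (simp add: expand sum_distrib_left mult_ac)
  also have "\<dots> = (\<Sum>E\<in>Pow I. coef E * (\<Sum>x\<in>S. G x * mono E x))"
    by (subst sum.swap) (simp add: sum_distrib_left)
  also have "\<dots> = 0" using Q by simp
  finally show "\<gamma> x0 = 0" .
qed

end
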